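(* Let $s_\alpha$ be a defining map for $\Lambda^{d-k}\subset(M,g)$ with Gram matrix $G_{\alpha\beta}=\delta_{\alpha\beta}+\mathcal O(s^2)$, and set $n_{a\alpha}:=\nabla_a s_\alpha$ (so $\{n_\alpha|_\Lambda\}$ is an orthonormal frame of $N\Lambda$). Then along $\Lambda$ $$n^b_\alpha\nabla_a n_{b\beta}=\beta_{a\alpha\beta},\qquad \nabla_a n_{b\beta}={\rm II}_{ab\beta}+n_{b\alpha}\beta_{a\alpha\beta}+n_{a\alpha}\beta_{b\alpha\beta},$$ and $[n_\alpha,n_\beta]^a=2\beta^a{}_{\alpha\beta}$ on $\Lambda$.
   Context: $(M,g)$ Riemannian with Levi-Civita connection $\nabla$; Greek indices in $\{1,\dots,k\}$, repeated ones summed. Gram matrix $G_{\alpha\beta}=g^{ab}\nabla_as_\alpha\nabla_bs_\beta$; $\mathcal O(s^2)$ means a finite sum of terms $s_\gamma s_\delta T_{\gamma\delta}$ with $T$ smooth. $\bar g^a_b=\delta^a_b-n^a_\alpha n_{b\alpha}$, $\nabla^\top_a=\bar g^b_a\nabla_b$. Second fundamental form ${\rm II}_{ab\alpha}:=\bar g_{bc}\nabla^\top_a n^c_\alpha$; normal fundamental form $\beta_{a\alpha\beta}:=n^b_\alpha\nabla^\top_an_{b\beta}$ (both computed from the frame $n_\alpha|_\Lambda$). *)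

theory Defs
  imports "HOL-Analysis.Analysis"
begin

text \<open>Local-coordinate model: the Riemannian manifold is an open set U of real^'d
 with metric components g x (a symmetric positive definite matrix at each point).
 Latin indices range over 'd, Greek indices over the finite type 'k.\<close>

definition pd :: "'d::finite \<Rightarrow> (real^'d \<Rightarrow> real) \<Rightarrow> real^'d \<Rightarrow> real" where
  "pd i f x = frechet_derivative f (at x) (axis i 1)"

fun Ck :: "nat \<Rightarrow> (real^'d::finite) set \<Rightarrow> (real^'d \<Rightarrow> real) \<Rightarrow> bool" where
  "Ck 0 U f = continuous_on U f"
| "Ck (Suc n) U f = (f differentiable_on U \<and> (\<forall>i. Ck n U (pd i f)))"

definition smooth_on :: "(real^'d::finite) set \<Rightarrow> (real^'d \<Rightarrow> real) \<Rightarrow> bool" where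
  "smooth_on U f = (\<forall>n. Ck n U f)"

definition riemannian_metric :: "(real^'d::finite) set \<Rightarrow> (real^'d \<Rightarrow> real^'d^'d) \<Rightarrow> bool" where
  "riemannian_metric U g = (open U \<and> (\<forall>a b. smooth_on U (\<lambda>x. g x $ a $ b)) \<and>
     (\<forall>x\<in>U. transpose (g x) = g x \<and> (\<forall>v. v \<noteq> 0 \<longrightarrow> v \<bullet> (g x *v v) > 0)))"

definition ginv :: "(real^'d::finite \<Rightarrow> real^'d^'d) \<Rightarrow> real^'d \<Rightarrow> 'd \<Rightarrow> 'd \<Rightarrow> real" where
  "ginv g x a b = matrix_inv (g x) $ a $ b"

definition Gamma :: "(real^'d::finite \<Rightarrow> real^'d^'d) \<Rightarrow> 'd \<Rightarrow> 'd \<Rightarrow> 'd \<Rightarrow> real^'d \<Rightarrow> real" where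
  "Gamma g c a b x = (1/2) * (\<Sum>e\<in>UNIV. ginv g x c e *
      (pd a (\<lambda>y. g y $ e $ b) x + pd b (\<lambda>y. g y $ e $ a) x - pd e (\<lambda>y. g y $ a $ b) x))"

definition cov_form :: "(real^'d::finite \<Rightarrow> real^'d^'d) \<Rightarrow> ('d \<Rightarrow> real^'d \<Rightarrow> real) \<Rightarrow> 'd \<Rightarrow> 'd \<Rightarrow> real^'d \<Rightarrow> real" where
  "cov_form g w a b x = pd a (w b) x - (\<Sum>c\<in>UNIV. Gamma g c a b x * w c x)"

definition cov_vec :: "(real^'d::finite \<Rightarrow> real^'d^'d) \<Rightarrow> ('d \<Rightarrow> real^'d \<Rightarrow> real) \<Rightarrow> 'd \<Rightarrow> 'd \<Rightarrow> real^'d \<Rightarrow> real" where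
  "cov_vec g V a c x = pd a (V c) x + (\<Sum>e\<in>UNIV. Gamma g c a e x * V e x)"

definition lie_bracket :: "('d \<Rightarrow> real^'d::finite \<Rightarrow> real) \<Rightarrow> ('d \<Rightarrow> real^'d \<Rightarrow> real) \<Rightarrow> 'd \<Rightarrow> real^'d \<Rightarrow> real" where
  "lie_bracket X Y a x = (\<Sum>b\<in>UNIV. X b x * pd b (Y a) x - Y b x * pd b (X a) x)"

definition nlow :: "('k \<Rightarrow> real^'d::finite \<Rightarrow> real) \<Rightarrow> 'k \<Rightarrow> 'd \<Rightarrow> real^'d \<Rightarrow> real" where
  "nlow s \<alpha> a x = pd a (s \<alpha>) x"

definition nup :: "(real^'d::finite \<Rightarrow> real^'d^'d) \<Rightarrow> ('k \<Rightarrow> real^'d \<Rightarrow> real) \<Rightarrow> 'k \<Rightarrow> 'd \<Rightarrow> real^'d \<Rightarrow> real" where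
  "nup g s \<alpha> a x = (\<Sum>b\<in>UNIV. ginv g x a b * nlow s \<alpha> b x)"

definition gram :: "(real^'d::finite \<Rightarrow> real^'d^'d) \<Rightarrow> ('k \<Rightarrow> real^'d \<Rightarrow> real) \<Rightarrow> 'k \<Rightarrow> 'k \<Rightarrow> real^'d \<Rightarrow> real" where
  "gram g s \<alpha> \<beta> x = (\<Sum>a\<in>UNIV. \<Sum>b\<in>UNIV. ginv g x a b * nlow s \<alpha> a x * nlow s \<beta> b x)"

definition defining_map :: "(real^'d::finite) set \<Rightarrow> ('k::finite \<Rightarrow> real^'d \<Rightarrow> real) \<Rightarrow> (real^'d) set \<Rightarrow> bool" where
  "defining_map U s Lam = ((\<forall>\<alpha>. smooth_on U (s \<alpha>)) \<and> Lam = {x\<in>U. \<forall>\<alpha>. s \<alpha> x = 0} \<and>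
     (\<forall>x\<in>Lam. \<forall>c::'k \<Rightarrow> real. (\<forall>a. (\<Sum>\<alpha>\<in>UNIV. c \<alpha> * nlow s \<alpha> a x) = 0) \<longrightarrow> (\<forall>\<alpha>. c \<alpha> = 0)))"

definition gram_delta_Os2 :: "(real^'d::finite) set \<Rightarrow> (real^'d \<Rightarrow> real^'d^'d) \<Rightarrow> ('k::finite \<Rightarrow> real^'d \<Rightarrow> real) \<Rightarrow> bool" where
  "gram_delta_Os2 U g s = (\<exists>T :: 'k \<Rightarrow> 'k \<Rightarrow> 'k \<Rightarrow> 'k \<Rightarrow> real^'d \<Rightarrow> real.
     (\<forall>\<gamma> \<delta> \<alpha> \<beta>. smooth_on U (T \<gamma> \<delta> \<alpha> \<beta>)) \<and>
     (\<forall>x\<in>U. \<forall>\<alpha> \<beta>. gram g s \<alpha> \<beta> x = (if \<alpha> = \<beta> then 1 else 0) +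
        (\<Sum>\<gamma>\<in>UNIV. \<Sum>\<delta>\<in>UNIV. s \<gamma> x * s \<delta> x * T \<gamma> \<delta> \<alpha> \<beta> x)))"

definition gbar :: "(real^'d::finite \<Rightarrow> real^'d^'d) \<Rightarrow> ('k::finite \<Rightarrow> real^'d \<Rightarrow> real) \<Rightarrow> 'd \<Rightarrow> 'd \<Rightarrow> real^'d \<Rightarrow> real" where
  "gbar g s a b x = (if a = b then 1 else 0) - (\<Sum>\<alpha>\<in>UNIV. nup g s \<alpha> a x * nlow s \<alpha> b x)"

definition gbar_low :: "(real^'d::finite \<Rightarrow> real^'d^'d) \<Rightarrow> ('k::finite \<Rightarrow> real^'d \<Rightarrow> real) \<Rightarrow> 'd \<Rightarrow> 'd \<Rightarrow> real^'d \<Rightarrow> real" where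
  "gbar_low g s a b x = g x $ a $ b - (\<Sum>\<alpha>\<in>UNIV. nlow s \<alpha> a x * nlow s \<alpha> b x)"

definition second_ff :: "(real^'d::finite \<Rightarrow> real^'d^'d) \<Rightarrow> ('k::finite \<Rightarrow> real^'d \<Rightarrow> real) \<Rightarrow> 'd \<Rightarrow> 'd \<Rightarrow> 'k \<Rightarrow> real^'d \<Rightarrow> real" where
  "second_ff g s a b \<beta> x = (\<Sum>c\<in>UNIV. gbar_low g s b c x *
      (\<Sum>d\<in>UNIV. gbar g s d a x * cov_vec g (\<lambda>e. nup g s \<beta> e) d c x))"

definition normal_ff :: "(real^'d::finite \<Rightarrow> real^'d^'d) \<Rightarrow> ('k::finite \<Rightarrow> real^'d \<Rightarrow> real) \<Rightarrow> 'd \<Rightarrow> 'k \<Rightarrow> 'k \<Rightarrow> real^'d \<Rightarrow> real" where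
  "normal_ff g s a \<alpha> \<beta> x = (\<Sum>b\<in>UNIV. nup g s \<alpha> b x *
      (\<Sum>d\<in>UNIV. gbar g s d a x * cov_form g (\<lambda>e. nlow s \<beta> e) d b x))"

end

theory Submission
  imports Defs
begin

lemma pd_has: "(f has_derivative f') (at x) \<Longrightarrow> pd i f x = f' (axis i 1)"
  unfolding pd_def by (metis frechet_derivative_at)

lemma pd_works: "f differentiable (at x) \<Longrightarrow> (f has_derivative (\<lambda>h. frechet_derivative f (at x) h)) (at x)"
  using frechet_derivative_works by auto

lemma pd_mult:
  assumes "f differentiable (at x)" "h differentiable (at x)"
  shows "pd i (\<lambda>y. f y * h y) x = pd i f x * h x + f x * pd i h x"
proof -
  have "((\<lambda>y. f y * h y) has_derivative
     (\<lambda>v. f x * frechet_derivative h (at x) v + frechet_derivative f (at x) v * h x)) (at x)"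
    by (rule has_derivative_mult[OF pd_works[OF assms(1)] pd_works[OF assms(2)]])
  from pd_has[OF this] show ?thesis unfolding pd_def by simp
qed

lemma pd_add:
  assumes "f differentiable (at x)" "h differentiable (at x)"
  shows "pd i (\<lambda>y. f y + h y) x = pd i f x + pd i h x"
proof -
  have "((\<lambda>y. f y + h y) has_derivative
     (\<lambda>v. frechet_derivative f (at x) v + frechet_derivative h (at x) v)) (at x)"
    by (rule has_derivative_add[OF pd_works[OF assms(1)] pd_works[OF assms(2)]])
  from pd_has[OF this] show ?thesis unfolding pd_def by simp
qed

lemma pd_diff:
  assumes "f differentiable (at x)" "h differentiable (at x)"
  shows "pd i (\<lambda>y. f y - h y) x = pd i f x - pd i h x"
proof -
  have "((\<lambda>y. f y - h y) has_derivative
     (\<lambda>v. frechet_derivative f (at x) v - frechet_derivative h (at x) v)) (at x)"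
    by (rule has_derivative_diff[OF pd_works[OF assms(1)] pd_works[OF assms(2)]])
  from pd_has[OF this] show ?thesis unfolding pd_def by simp
qed

lemma pd_sum:
  assumes "\<And>j. j \<in> A \<Longrightarrow> f j differentiable (at x)"
  shows "pd i (\<lambda>y. \<Sum>j\<in>A. f j y) x = (\<Sum>j\<in>A. pd i (f j) x)"
proof -
  have "((\<lambda>y. \<Sum>j\<in>A. f j y) has_derivative
     (\<lambda>v. \<Sum>j\<in>A. frechet_derivative (f j) (at x) v)) (at x)"
    by (rule has_derivative_sum) (use pd_works assms in auto)
  from pd_has[OF this] show ?thesis unfolding pd_def by simp
qed

lemma pd_const: "pd i (\<lambda>y. c) x = 0"
  unfolding pd_def by simp

lemma pd_local:
  assumes "f differentiable (at x)" "open U" "x \<in> U" "\<And>y. y \<in> U \<Longrightarrow> f y = h y"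
  shows "pd i f x = pd i h x"
  unfolding pd_def using frechet_derivative_transform_within_open[OF assms] by simp

lemma differentiable_prod_at:
  fixes f :: "'i \<Rightarrow> 'a::real_normed_vector \<Rightarrow> real"
  assumes "\<And>j. j \<in> A \<Longrightarrow> f j differentiable (at x)"
  shows "(\<lambda>y. \<Prod>j\<in>A. f j y) differentiable (at x)"
proof -
  obtain D where "\<And>j. j \<in> A \<Longrightarrow> (f j has_derivative D j) (at x)"
    using assms unfolding differentiable_def by metis
  then show ?thesis unfolding differentiable_def using has_derivative_prod by blast
qed

lemma line_deriv:
  fixes f :: "real^'d::finite \<Rightarrow> real"
  assumes "f differentiable (at (p + u *\<^sub>R e))"
  shows "((\<lambda>t. f (p + t *\<^sub>R e)) has_real_derivative frechet_derivative f (at (p + u *\<^sub>R e)) e) (at u)"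
proof -
  let ?q = "p + u *\<^sub>R e"
  have l: "linear (frechet_derivative f (at ?q))"
    using assms linear_frechet_derivative by blast
  have d1: "((\<lambda>t. p + t *\<^sub>R e) has_derivative (\<lambda>h. h *\<^sub>R e)) (at u)"
    by (auto intro!: derivative_eq_intros)
  have "((\<lambda>t. f (p + t *\<^sub>R e)) has_derivative (\<lambda>h. frechet_derivative f (at ?q) (h *\<^sub>R e))) (at u)"
    using diff_chain_at[OF d1, of f] pd_works[OF assms] by (simp add: o_def)
  moreover have "(\<lambda>h. frechet_derivative f (at ?q) (h *\<^sub>R e)) = (\<lambda>h. frechet_derivative f (at ?q) e * h)"
    using linear_cmul[OF l] by (auto simp: mult.commute)
  ultimately show ?thesis unfolding has_field_derivative_def by simp
qed


lemma pt_in_ball: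
  fixes x :: "real^'d::finite"
  assumes "\<bar>a\<bar> \<le> t" "\<bar>b\<bar> \<le> t" "2*t < r"
  shows "x + a *\<^sub>R axis i 1 + b *\<^sub>R axis j 1 \<in> ball x r"
proof -
  have "norm (a *\<^sub>R axis i (1::real) + b *\<^sub>R axis j 1) \<le> norm (a *\<^sub>R axis i (1::real)) + norm (b *\<^sub>R axis j (1::real))"
    by (rule norm_triangle_ineq)
  also have "\<dots> = \<bar>a\<bar> + \<bar>b\<bar>" by simp
  finally have "norm (a *\<^sub>R axis i (1::real) + b *\<^sub>R axis j 1) < r" using assms by linarith
  moreover have "dist x (x + w) = norm w" for w :: "real^'d" by (simp add: dist_norm)
  ultimately show ?thesis by (simp add: add.assoc)
qed

lemma mixed_mvt:
  fixes f :: "real^'d::finite \<Rightarrow> real"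
  assumes sub: "ball x r \<subseteq> U" and t: "0 < t" "2*t < r"
    and df: "\<And>y. y \<in> U \<Longrightarrow> f differentiable (at y)"
    and dfi: "\<And>y. y \<in> U \<Longrightarrow> pd i f differentiable (at y)"
  shows "\<exists>\<xi> \<eta>. 0 < \<xi> \<and> \<xi> < t \<and> 0 < \<eta> \<and> \<eta> < t \<and>
     f (x + t *\<^sub>R axis i 1 + t *\<^sub>R axis j 1) - f (x + t *\<^sub>R axis i 1) - f (x + t *\<^sub>R axis j 1) + f x
      = t * t * pd j (pd i f) (x + \<xi> *\<^sub>R axis i 1 + \<eta> *\<^sub>R axis j 1)"
proof -
  let ?ei = "axis i (1::real) :: real^'d" and ?ej = "axis j (1::real) :: real^'d"
  have inU: "\<And>a b. \<bar>a\<bar> \<le> t \<Longrightarrow> \<bar>b\<bar> \<le> t \<Longrightarrow> x + a *\<^sub>R ?ei + b *\<^sub>R ?ej \<in> U"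
    using pt_in_ball[OF _ _ t(2)] sub by blast
  define \<phi> where "\<phi> u = f ((x + t *\<^sub>R ?ej) + u *\<^sub>R ?ei) - f (x + u *\<^sub>R ?ei)" for u
  have "\<And>u. 0 \<le> u \<Longrightarrow> u \<le> t \<Longrightarrow> DERIV \<phi> u :> (pd i f ((x + t *\<^sub>R ?ej) + u *\<^sub>R ?ei) - pd i f (x + u *\<^sub>R ?ei))"
  proof -
    fix u assume u: "0 \<le> u" "u \<le> t"
    have p1: "(x + t *\<^sub>R ?ej) + u *\<^sub>R ?ei \<in> U" using inU[of u t] u t by (simp add: algebra_simps)
    have p2: "x + u *\<^sub>R ?ei \<in> U" using inU[of u 0] u t by simp
    have p2': "(x + 0 *\<^sub>R ?ej) + u *\<^sub>R ?ei = x + u *\<^sub>R ?ei" by simp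
    show "DERIV \<phi> u :> (pd i f ((x + t *\<^sub>R ?ej) + u *\<^sub>R ?ei) - pd i f (x + u *\<^sub>R ?ei))"
      unfolding \<phi>_def pd_def
      by (rule DERIV_diff[OF line_deriv[OF df[OF p1]] line_deriv[of f x u ?ei, OF df]]) (use p2 in simp)
  qed
  from MVT2[OF t(1) this] obtain \<xi> where xi: "0 < \<xi>" "\<xi> < t"
    "\<phi> t - \<phi> 0 = (t - 0) * (pd i f ((x + t *\<^sub>R ?ej) + \<xi> *\<^sub>R ?ei) - pd i f (x + \<xi> *\<^sub>R ?ei))"
    by blast
  define \<psi> where "\<psi> v = pd i f ((x + \<xi> *\<^sub>R ?ei) + v *\<^sub>R ?ej)" for v
  have "\<And>v. 0 \<le> v \<Longrightarrow> v \<le> t \<Longrightarrow> DERIV \<psi> v :> pd j (pd i f) ((x + \<xi> *\<^sub>R ?ei) + v *\<^sub>R ?ej)"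
  proof -
    fix v assume v: "0 \<le> v" "v \<le> t"
    have p1: "(x + \<xi> *\<^sub>R ?ei) + v *\<^sub>R ?ej \<in> U" using inU[of \<xi> v] v xi by simp
    show "DERIV \<psi> v :> pd j (pd i f) ((x + \<xi> *\<^sub>R ?ei) + v *\<^sub>R ?ej)"
      unfolding \<psi>_def pd_def[of j]
      by (rule line_deriv[OF dfi[OF p1]])
  qed
  from MVT2[OF t(1) this] obtain \<eta> where eta: "0 < \<eta>" "\<eta> < t"
    "\<psi> t - \<psi> 0 = (t - 0) * pd j (pd i f) ((x + \<xi> *\<^sub>R ?ei) + \<eta> *\<^sub>R ?ej)"
    by blast
  have "f (x + t *\<^sub>R ?ei + t *\<^sub>R ?ej) - f (x + t *\<^sub>R ?ei) - f (x + t *\<^sub>R ?ej) + f x = \<phi> t - \<phi> 0"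
    unfolding \<phi>_def by (simp add: algebra_simps)
  also have "\<dots> = t * (\<psi> t - \<psi> 0)"
    unfolding xi(3) \<psi>_def by (simp add: algebra_simps)
  also have "\<dots> = t * t * pd j (pd i f) (x + \<xi> *\<^sub>R ?ei + \<eta> *\<^sub>R ?ej)"
    unfolding eta(3) by simp
  finally show ?thesis using xi eta by blast
qed

lemma clairaut:
  fixes f :: "real^'d::finite \<Rightarrow> real"
  assumes U: "open U" "x \<in> U"
    and df: "\<And>y. y \<in> U \<Longrightarrow> f differentiable (at y)"
    and dfi: "\<And>y. y \<in> U \<Longrightarrow> pd i f differentiable (at y)"
    and dfj: "\<And>y. y \<in> U \<Longrightarrow> pd j f differentiable (at y)"
    and ci: "continuous_on U (pd j (pd i f))"
    and cj: "continuous_on U (pd i (pd j f))"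
  shows "pd j (pd i f) x = pd i (pd j f) x"
proof (rule ccontr)
  let ?ei = "axis i (1::real) :: real^'d" and ?ej = "axis j (1::real) :: real^'d"
  let ?D1 = "pd j (pd i f) x" and ?D2 = "pd i (pd j f) x"
  assume ne: "?D1 \<noteq> ?D2"
  define e where "e = \<bar>?D1 - ?D2\<bar> / 2"
  have e: "e > 0" using ne by (simp add: e_def)
  obtain r where r: "r > 0" "ball x r \<subseteq> U" using U open_contains_ball by blast
  obtain d1 where d1: "d1 > 0" "\<And>y. y \<in> U \<Longrightarrow> dist y x < d1 \<Longrightarrow> dist (pd j (pd i f) y) ?D1 < e"
    using ci U(2) e unfolding continuous_on_iff by blast
  obtain d2 where d2: "d2 > 0" "\<And>y. y \<in> U \<Longrightarrow> dist y x < d2 \<Longrightarrow> dist (pd i (pd j f) y) ?D2 < e"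
    using cj U(2) e unfolding continuous_on_iff by blast
  define t where "t = min r (min d1 d2) / 4"
  have t: "0 < t" "2*t < r" "2*t < d1" "2*t < d2" using r d1 d2 by (auto simp: t_def)
  obtain \<xi> \<eta> where A: "0 < \<xi>" "\<xi> < t" "0 < \<eta>" "\<eta> < t"
     "f (x + t *\<^sub>R ?ei + t *\<^sub>R ?ej) - f (x + t *\<^sub>R ?ei) - f (x + t *\<^sub>R ?ej) + f x
      = t * t * pd j (pd i f) (x + \<xi> *\<^sub>R ?ei + \<eta> *\<^sub>R ?ej)"
    using mixed_mvt[OF r(2) t(1,2) df dfi] by blast
  obtain \<xi>' \<eta>' where B: "0 < \<xi>'" "\<xi>' < t" "0 < \<eta>'" "\<eta>' < t"
     "f (x + t *\<^sub>R ?ej + t *\<^sub>R ?ei) - f (x + t *\<^sub>R ?ej) - f (x + t *\<^sub>R ?ei) + f x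
      = t * t * pd i (pd j f) (x + \<xi>' *\<^sub>R ?ej + \<eta>' *\<^sub>R ?ei)"
    using mixed_mvt[OF r(2) t(1,2) df dfj] by blast
  have "t * t * pd j (pd i f) (x + \<xi> *\<^sub>R ?ei + \<eta> *\<^sub>R ?ej) = t * t * pd i (pd j f) (x + \<xi>' *\<^sub>R ?ej + \<eta>' *\<^sub>R ?ei)"
    using A(5) B(5) by (simp add: algebra_simps)
  then have eq: "pd j (pd i f) (x + \<xi> *\<^sub>R ?ei + \<eta> *\<^sub>R ?ej) = pd i (pd j f) (x + \<xi>' *\<^sub>R ?ej + \<eta>' *\<^sub>R ?ei)"
    using t(1) by simp
  have p1: "x + \<xi> *\<^sub>R ?ei + \<eta> *\<^sub>R ?ej \<in> ball x (2*t+t)"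
    using pt_in_ball[where t=t and r="2*t+t" and a=\<xi> and b=\<eta>] A t by auto
  have p2: "x + \<xi>' *\<^sub>R ?ej + \<eta>' *\<^sub>R ?ei \<in> ball x (2*t+t)"
    using pt_in_ball[where t=t and r="2*t+t" and a="\<xi>'" and b="\<eta>'"] B t by auto
  have le: "2*t + t \<le> r" "2*t+t \<le> d1" "2*t+t \<le> d2" using r d1 d2 by (auto simp: t_def)
  have u1: "x + \<xi> *\<^sub>R ?ei + \<eta> *\<^sub>R ?ej \<in> U" "dist (x + \<xi> *\<^sub>R ?ei + \<eta> *\<^sub>R ?ej) x < d1"
    using p1 le r(2) by (auto simp: dist_commute subset_iff)
  have u2: "x + \<xi>' *\<^sub>R ?ej + \<eta>' *\<^sub>R ?ei \<in> U" "dist (x + \<xi>' *\<^sub>R ?ej + \<eta>' *\<^sub>R ?ei) x < d2"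
    using p2 le r(2) by (auto simp: dist_commute subset_iff)
  have q1: "dist (pd j (pd i f) (x + \<xi> *\<^sub>R ?ei + \<eta> *\<^sub>R ?ej)) ?D1 < e"
    using d1(2)[OF u1] .
  have q2: "dist (pd i (pd j f) (x + \<xi>' *\<^sub>R ?ej + \<eta>' *\<^sub>R ?ei)) ?D2 < e"
    using d2(2)[OF u2] .
  have "\<bar>?D1 - ?D2\<bar> < 2*e" using q1 q2 eq by (simp add: dist_real_def)
  then show False by (simp add: e_def)
qed


lemma minv:
  fixes A :: "real^'n::finite^'n"
  assumes "invertible A"
  shows "A ** matrix_inv A = mat 1" "matrix_inv A ** A = mat 1"
proof -
  have "\<exists>A'. A ** A' = mat 1 \<and> A' ** A = mat 1" using assms unfolding invertible_def by blast
  then have "A ** matrix_inv A = mat 1 \<and> matrix_inv A ** A = mat 1"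
    unfolding matrix_inv_def by (rule someI_ex)
  then show "A ** matrix_inv A = mat 1" "matrix_inv A ** A = mat 1" by auto
qed

lemma posdef_invertible:
  fixes A :: "real^'n::finite^'n"
  assumes "\<forall>v. v \<noteq> 0 \<longrightarrow> v \<bullet> (A *v v) > 0"
  shows "invertible A"
proof -
  have "\<forall>x. A *v x = 0 \<longrightarrow> x = 0"
    using assms by (metis inner_zero_right less_irrefl)
  then show ?thesis
    unfolding invertible_left_inverse matrix_left_invertible_ker by blast
qed

lemma minv_sym:
  fixes A :: "real^'n::finite^'n"
  assumes "transpose A = A" "invertible A"
  shows "transpose (matrix_inv A) = matrix_inv A"
proof -
  let ?B = "matrix_inv A"
  have "transpose ?B ** A = mat 1"
    by (metis assms(1) matrix_transpose_mul minv(1)[OF assms(2)] transpose_mat)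
  then have "transpose ?B = (transpose ?B ** A) ** ?B"
    by (metis matrix_mul_assoc matrix_mul_rid minv(1)[OF assms(2)])
  then show ?thesis using \<open>transpose ?B ** A = mat 1\<close> by (simp add: matrix_mul_lid)
qed

lemma mat_entry_sum: "(A ** B) $ i $ j = (\<Sum>k\<in>UNIV. A $ i $ k * B $ k $ j)"
  by (simp add: matrix_matrix_mult_def)

lemma inv_entry:
  fixes A :: "real^'n::finite^'n"
  assumes "invertible A"
  shows "(\<Sum>k\<in>UNIV. A $ i $ k * matrix_inv A $ k $ j) = (if i = j then 1 else 0)"
    "(\<Sum>k\<in>UNIV. matrix_inv A $ i $ k * A $ k $ j) = (if i = j then 1 else 0)"
  using minv[OF assms] unfolding mat_entry_sum[symmetric] by (simp_all add: mat_def)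

lemma delta_sum: "(\<Sum>d\<in>UNIV. (if d = a then 1 else 0) * X d) = (X (a::'a::finite)::real)"
proof -
  have "(\<Sum>d\<in>UNIV. (if d = a then 1 else 0) * X d) = (\<Sum>d\<in>UNIV. if d = a then X d else 0)"
    by (rule sum.cong) auto
  then show ?thesis by simp
qed
lemma delta_sum': "(\<Sum>d\<in>UNIV. (if a = d then 1 else 0) * X d) = (X (a::'a::finite)::real)"
proof -
  have "(\<Sum>d\<in>UNIV. (if a = d then 1 else 0) * X d) = (\<Sum>d\<in>UNIV. if d = a then X d else 0)"
    by (rule sum.cong) auto
  then show ?thesis by simp
qed

lemma contract_gen:
  "(\<Sum>k\<in>UNIV. P i k * (\<Sum>h\<in>UNIV. Q k h * X h)) = (\<Sum>h\<in>UNIV. (\<Sum>k\<in>UNIV. P i k * Q k h) * (X h::real))"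
proof -
  have "(\<Sum>k\<in>UNIV. P i k * (\<Sum>h\<in>UNIV. Q k h * X h)) = (\<Sum>k\<in>UNIV. \<Sum>h\<in>UNIV. P i k * Q k h * X h)"
    by (simp add: sum_distrib_left mult.assoc)
  also have "\<dots> = (\<Sum>h\<in>UNIV. \<Sum>k\<in>UNIV. P i k * Q k h * X h)" by (rule sum.swap)
  also have "\<dots> = (\<Sum>h\<in>UNIV. (\<Sum>k\<in>UNIV. P i k * Q k h) * (X h::real))" by (simp add: sum_distrib_right)
  finally show ?thesis .
qed

lemma contract1:
  fixes A :: "real^'n::finite^'n"
  assumes "invertible A"
  shows "(\<Sum>k\<in>UNIV. A $ i $ k * (\<Sum>h\<in>UNIV. matrix_inv A $ k $ h * X h)) = X i"
    "(\<Sum>k\<in>UNIV. matrix_inv A $ i $ k * (\<Sum>h\<in>UNIV. A $ k $ h * X h)) = X i"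
  unfolding contract_gen[where P="\<lambda>i k. A $ i $ k"] contract_gen[where P="\<lambda>i k. matrix_inv A $ i $ k"]
  by (simp_all add: inv_entry[OF assms] delta_sum')


lemma inv_cramer:
  fixes A :: "real^'n::finite^'n"
  assumes "invertible A"
  shows "matrix_inv A $ k $ m = det (\<chi> i j. if j = k then axis m 1 $ i else A $ i $ j) / det A"
proof -
  let ?b = "axis m (1::real) :: real^'n"
  have d0: "det A \<noteq> 0" using assms invertible_det_nz by blast
  have "A *v (matrix_inv A *v ?b) = ?b"
    by (simp add: matrix_vector_mul_assoc minv[OF assms])
  then have "matrix_inv A *v ?b = (\<chi> k. det(\<chi> i j. if j=k then ?b$i else A$i$j) / det A)"
    using cramer[OF d0] by blast
  then have "(matrix_inv A *v ?b) $ k = det(\<chi> i j. if j=k then ?b$i else A$i$j) / det A"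
    by simp
  moreover have "(matrix_inv A *v ?b) $ k = matrix_inv A $ k $ m"
    by (simp add: matrix_vector_mult_def axis_def if_distrib cong: if_cong)
  ultimately show ?thesis by simp
qed

lemma det_differentiable:
  fixes M :: "'a::real_normed_vector \<Rightarrow> real^'n::finite^'n"
  assumes "\<And>i j. (\<lambda>y. M y $ i $ j) differentiable (at x)"
  shows "(\<lambda>y. det (M y)) differentiable (at x)"
  unfolding det_def
  apply (rule differentiable_sum)
   apply (simp add: finite_permutations)
  apply (intro ballI differentiable_mult differentiable_const differentiable_prod_at assms)
  done

lemma differentiable_transform_open:
  assumes "f differentiable (at x)" "open U" "x \<in> U" "\<And>y. y \<in> U \<Longrightarrow> f y = h y"
  shows "h differentiable (at x)"
  using assms has_derivative_transform_within_open unfolding differentiable_def by blast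

lemma minv_differentiable:
  fixes G :: "'a::real_normed_vector \<Rightarrow> real^'n::finite^'n"
  assumes U: "open U" "x \<in> U" and inv: "\<And>y. y \<in> U \<Longrightarrow> invertible (G y)"
    and d: "\<And>i j. (\<lambda>y. G y $ i $ j) differentiable (at x)"
  shows "(\<lambda>y. matrix_inv (G y) $ k $ m) differentiable (at x)"
proof -
  have "(\<lambda>y. det (\<chi> i j. if j = k then axis m 1 $ i else G y $ i $ j) / det (G y)) differentiable (at x)"
  proof (rule differentiable_divide)
    show "(\<lambda>y. det (\<chi> i j. if j = k then axis m 1 $ i else G y $ i $ j)) differentiable (at x)"
    proof (rule det_differentiable)
      fix i j show "(\<lambda>y. (\<chi> i j. if j = k then axis m 1 $ i else G y $ i $ j) $ i $ j) differentiable (at x)"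
        by (cases "j = k") (simp_all add: d)
    qed
    show "(\<lambda>y. det (G y)) differentiable (at x)" by (rule det_differentiable[OF d])
    show "det (G x) \<noteq> 0" using inv[OF U(2)] invertible_det_nz by blast
  qed
  then show ?thesis
    by (rule differentiable_transform_open[OF _ U]) (simp add: inv_cramer[OF inv])
qed


lemma alg_C_zero:
  fixes C :: "'k \<Rightarrow> 'k \<Rightarrow> 'k \<Rightarrow> real"
  assumes sym: "\<And>a b c. C a b c = C b a c" and anti: "\<And>a b c. C a b c = - C a c b"
  shows "C a b c = 0"
proof -
  have "C a b c = - C a c b" by (rule anti)
  also have "\<dots> = - C c a b" by (simp add: sym)
  also have "\<dots> = C c b a" by (simp add: anti[of c a b])
  also have "\<dots> = C b c a" by (simp add: sym)
  also have "\<dots> = - C b a c" by (simp add: anti[of b c a])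
  also have "\<dots> = - C a b c" by (simp add: sym)
  finally show ?thesis by simp
qed

lemma sum3_rev:
  "(\<Sum>b\<in>A. \<Sum>d\<in>B. \<Sum>c\<in>C. X b d c) = (\<Sum>c\<in>C. \<Sum>d\<in>B. \<Sum>b\<in>A. X b d c)"
proof -
  have "(\<Sum>b\<in>A. \<Sum>d\<in>B. \<Sum>c\<in>C. X b d c) = (\<Sum>d\<in>B. \<Sum>b\<in>A. \<Sum>c\<in>C. X b d c)"
    by (rule sum.swap)
  also have "\<dots> = (\<Sum>d\<in>B. \<Sum>c\<in>C. \<Sum>b\<in>A. X b d c)"
    by (rule sum.cong[OF refl], rule sum.swap)
  also have "\<dots> = (\<Sum>c\<in>C. \<Sum>d\<in>B. \<Sum>b\<in>A. X b d c)"
    by (rule sum.swap)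
  finally show ?thesis .
qed



lemma alg_claim1:
  fixes H :: "'k::finite \<Rightarrow> 'd::finite \<Rightarrow> 'd \<Rightarrow> real" and n nu :: "'k \<Rightarrow> 'd \<Rightarrow> real"
  assumes Hs: "\<And>\<beta> a b. H \<beta> a b = H \<beta> b a"
    and anti: "\<And>a \<alpha> \<beta>. (\<Sum>b\<in>UNIV. nu \<alpha> b * H \<beta> a b) = - (\<Sum>b\<in>UNIV. nu \<beta> b * H \<alpha> a b)"
  shows "(\<Sum>b\<in>UNIV. nu \<alpha> b * H \<beta> a b) =
     (\<Sum>b\<in>UNIV. nu \<alpha> b * (\<Sum>d\<in>UNIV. ((if d = a then 1 else 0) - (\<Sum>\<gamma>\<in>UNIV. nu \<gamma> d * n \<gamma> a)) * H \<beta> d b))"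
proof -
  define C where "C \<gamma> \<alpha> \<beta> = (\<Sum>d\<in>UNIV. \<Sum>b\<in>UNIV. nu \<gamma> d * nu \<alpha> b * H \<beta> d b)" for \<gamma> \<alpha> \<beta>
  have Csym: "C \<gamma> \<alpha> \<beta> = C \<alpha> \<gamma> \<beta>" for \<gamma> \<alpha> \<beta>
    unfolding C_def
    apply (subst sum.swap)
    apply (rule sum.cong[OF refl])+
    apply (subst Hs)
    apply (simp add: mult_ac)
    done
  have Canti: "C \<gamma> \<alpha> \<beta> = - C \<gamma> \<beta> \<alpha>" for \<gamma> \<alpha> \<beta>
  proof -
    have "C \<gamma> \<alpha> \<beta> = (\<Sum>d\<in>UNIV. nu \<gamma> d * (\<Sum>b\<in>UNIV. nu \<alpha> b * H \<beta> d b))"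
      unfolding C_def by (simp add: sum_distrib_left mult.assoc)
    also have "\<dots> = (\<Sum>d\<in>UNIV. nu \<gamma> d * - (\<Sum>b\<in>UNIV. nu \<beta> b * H \<alpha> d b))"
      by (rule sum.cong[OF refl], subst anti, rule refl)
    also have "\<dots> = - C \<gamma> \<beta> \<alpha>"
      unfolding C_def by (simp add: sum_distrib_left mult.assoc sum_negf)
    finally show ?thesis .
  qed
  have C0: "C \<gamma> \<alpha> \<beta> = 0" for \<gamma> \<alpha> \<beta> using alg_C_zero[of C] Csym Canti by blast
  have s1: "(\<Sum>d\<in>UNIV. ((if d = a then 1 else 0) - (\<Sum>\<gamma>\<in>UNIV. nu \<gamma> d * n \<gamma> a)) * H \<beta> d b)
      = H \<beta> a b - (\<Sum>d\<in>UNIV. (\<Sum>\<gamma>\<in>UNIV. nu \<gamma> d * n \<gamma> a) * H \<beta> d b)" for b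
    by (simp add: left_diff_distrib sum_subtractf delta_sum)
  have s3: "(\<Sum>b\<in>UNIV. nu \<alpha> b * (\<Sum>d\<in>UNIV. (\<Sum>\<gamma>\<in>UNIV. nu \<gamma> d * n \<gamma> a) * H \<beta> d b))
      = (\<Sum>\<gamma>\<in>UNIV. n \<gamma> a * C \<gamma> \<alpha> \<beta>)"
  proof -
    have "(\<Sum>b\<in>UNIV. nu \<alpha> b * (\<Sum>d\<in>UNIV. (\<Sum>\<gamma>\<in>UNIV. nu \<gamma> d * n \<gamma> a) * H \<beta> d b))
       = (\<Sum>b\<in>UNIV. \<Sum>d\<in>UNIV. \<Sum>\<gamma>\<in>UNIV. n \<gamma> a * (nu \<gamma> d * nu \<alpha> b * H \<beta> d b))"
      by (simp add: sum_distrib_left sum_distrib_right mult.assoc mult.left_commute)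
    also have "\<dots> = (\<Sum>\<gamma>\<in>UNIV. \<Sum>d\<in>UNIV. \<Sum>b\<in>UNIV. n \<gamma> a * (nu \<gamma> d * nu \<alpha> b * H \<beta> d b))"
      by (rule sum3_rev)
    also have "\<dots> = (\<Sum>\<gamma>\<in>UNIV. n \<gamma> a * C \<gamma> \<alpha> \<beta>)"
      unfolding C_def by (simp add: sum_distrib_left)
    finally show ?thesis .
  qed
  have "(\<Sum>b\<in>UNIV. nu \<alpha> b * (\<Sum>d\<in>UNIV. ((if d = a then 1 else 0) - (\<Sum>\<gamma>\<in>UNIV. nu \<gamma> d * n \<gamma> a)) * H \<beta> d b))
     = (\<Sum>b\<in>UNIV. nu \<alpha> b * H \<beta> a b) - (\<Sum>\<gamma>\<in>UNIV. n \<gamma> a * C \<gamma> \<alpha> \<beta>)"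
    unfolding s1 s3[symmetric] by (simp add: right_diff_distrib sum_subtractf)
  then show ?thesis using C0 by simp
qed

lemma SM1: "(\<Sum>i\<in>A. f i * (\<Sum>j\<in>B. g j * h i j)) = (\<Sum>j\<in>B. g j * (\<Sum>i\<in>A. f i * (h i j::real)))"
proof -
  have "(\<Sum>i\<in>A. f i * (\<Sum>j\<in>B. g j * h i j)) = (\<Sum>i\<in>A. \<Sum>j\<in>B. g j * (f i * h i j))"
    by (simp add: sum_distrib_left mult.left_commute)
  also have "\<dots> = (\<Sum>j\<in>B. \<Sum>i\<in>A. g j * (f i * h i j))" by (rule sum.swap)
  also have "\<dots> = (\<Sum>j\<in>B. g j * (\<Sum>i\<in>A. f i * (h i j::real)))" by (simp add: sum_distrib_left)
  finally show ?thesis .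
qed

lemma SM2: "(\<Sum>i\<in>A. (\<Sum>j\<in>B. h i j) * f i) = (\<Sum>j\<in>B. \<Sum>i\<in>A. h i j * (f i::real))"
proof -
  have "(\<Sum>i\<in>A. (\<Sum>j\<in>B. h i j) * f i) = (\<Sum>i\<in>A. \<Sum>j\<in>B. h i j * f i)"
    by (simp add: sum_distrib_right)
  also have "\<dots> = (\<Sum>j\<in>B. \<Sum>i\<in>A. h i j * (f i::real))" by (rule sum.swap)
  finally show ?thesis .
qed

lemma SM3: "(\<Sum>i\<in>A. f i * (\<Sum>j\<in>B. h i j)) = (\<Sum>j\<in>B. \<Sum>i\<in>A. f i * (h i j::real))"
proof -
  have "(\<Sum>i\<in>A. f i * (\<Sum>j\<in>B. h i j)) = (\<Sum>i\<in>A. \<Sum>j\<in>B. f i * h i j)"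
    by (simp add: sum_distrib_left)
  also have "\<dots> = (\<Sum>j\<in>B. \<Sum>i\<in>A. f i * (h i j::real))" by (rule sum.swap)
  finally show ?thesis .
qed

lemma alg_claim2:
  fixes H :: "'k::finite \<Rightarrow> 'd::finite \<Rightarrow> 'd \<Rightarrow> real" and n nu :: "'k \<Rightarrow> 'd \<Rightarrow> real"
    and gi gm :: "'d \<Rightarrow> 'd \<Rightarrow> real"
  assumes Hs: "\<And>\<beta> a b. H \<beta> a b = H \<beta> b a"
    and anti: "\<And>a \<alpha> \<beta>. (\<Sum>b\<in>UNIV. nu \<alpha> b * H \<beta> a b) = - (\<Sum>b\<in>UNIV. nu \<beta> b * H \<alpha> a b)"
    and nu_def: "\<And>\<alpha> a. nu \<alpha> a = (\<Sum>b\<in>UNIV. gi a b * n \<alpha> b)"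
    and gis: "\<And>a b. gi a b = gi b a"
    and inv: "\<And>b h. (\<Sum>c\<in>UNIV. gm b c * gi c h) = (if b = h then 1 else 0)"
  shows "H \<beta> a b =
     (\<Sum>c\<in>UNIV. (gm b c - (\<Sum>\<alpha>\<in>UNIV. n \<alpha> b * n \<alpha> c)) *
        (\<Sum>d\<in>UNIV. ((if d = a then 1 else 0) - (\<Sum>\<gamma>\<in>UNIV. nu \<gamma> d * n \<gamma> a)) *
            (\<Sum>h\<in>UNIV. gi c h * H \<beta> d h)))
   + (\<Sum>\<alpha>\<in>UNIV. n \<alpha> b * (\<Sum>b'\<in>UNIV. nu \<alpha> b' * (\<Sum>d\<in>UNIV. ((if d = a then 1 else 0) - (\<Sum>\<gamma>\<in>UNIV. nu \<gamma> d * n \<gamma> a)) * H \<beta> d b')))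
   + (\<Sum>\<alpha>\<in>UNIV. n \<alpha> a * (\<Sum>b'\<in>UNIV. nu \<alpha> b' * (\<Sum>d\<in>UNIV. ((if d = b then 1 else 0) - (\<Sum>\<gamma>\<in>UNIV. nu \<gamma> d * n \<gamma> b)) * H \<beta> d b')))"
proof -
  define gb where "gb d a' = ((if d = a' then 1 else 0) - (\<Sum>\<gamma>\<in>UNIV. nu \<gamma> d * n \<gamma> a'))" for d a'
  define K where "K h = (\<Sum>d\<in>UNIV. gb d a * H \<beta> d h)" for h
  have A: "(\<Sum>d\<in>UNIV. gb d a * (\<Sum>h\<in>UNIV. gi c h * H \<beta> d h)) = (\<Sum>h\<in>UNIV. gi c h * K h)" for c
    unfolding K_def by (rule SM1)
  have B1: "(\<Sum>c\<in>UNIV. (gm b c - (\<Sum>\<alpha>\<in>UNIV. n \<alpha> b * n \<alpha> c)) * gi c h) =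
       (if b = h then 1 else 0) - (\<Sum>\<alpha>\<in>UNIV. n \<alpha> b * nu \<alpha> h)" for h
  proof -
    have "(\<Sum>c\<in>UNIV. (\<Sum>\<alpha>\<in>UNIV. n \<alpha> b * n \<alpha> c) * gi c h) = (\<Sum>\<alpha>\<in>UNIV. \<Sum>c\<in>UNIV. n \<alpha> b * n \<alpha> c * gi c h)"
      by (rule SM2)
    also have "\<dots> = (\<Sum>\<alpha>\<in>UNIV. n \<alpha> b * nu \<alpha> h)"
      unfolding nu_def by (rule sum.cong[OF refl]) (simp add: sum_distrib_left gis[of _ h] mult_ac)
    finally have e: "(\<Sum>c\<in>UNIV. (\<Sum>\<alpha>\<in>UNIV. n \<alpha> b * n \<alpha> c) * gi c h) = (\<Sum>\<alpha>\<in>UNIV. n \<alpha> b * nu \<alpha> h)" .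
    show ?thesis
      by (simp add: left_diff_distrib sum_subtractf inv e)
  qed
  have B: "(\<Sum>c\<in>UNIV. (gm b c - (\<Sum>\<alpha>\<in>UNIV. n \<alpha> b * n \<alpha> c)) * (\<Sum>h\<in>UNIV. gi c h * K h))
      = K b - (\<Sum>\<alpha>\<in>UNIV. n \<alpha> b * (\<Sum>h\<in>UNIV. nu \<alpha> h * K h))"
  proof -
    have "(\<Sum>c\<in>UNIV. (gm b c - (\<Sum>\<alpha>\<in>UNIV. n \<alpha> b * n \<alpha> c)) * (\<Sum>h\<in>UNIV. gi c h * K h))
       = (\<Sum>h\<in>UNIV. \<Sum>c\<in>UNIV. (gm b c - (\<Sum>\<alpha>\<in>UNIV. n \<alpha> b * n \<alpha> c)) * (gi c h * K h))"
      by (rule SM3)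
    also have "\<dots> = (\<Sum>h\<in>UNIV. (\<Sum>c\<in>UNIV. (gm b c - (\<Sum>\<alpha>\<in>UNIV. n \<alpha> b * n \<alpha> c)) * gi c h) * K h)"
      by (simp add: sum_distrib_right mult.assoc)
    also have "\<dots> = (\<Sum>h\<in>UNIV. ((if b = h then 1 else 0) - (\<Sum>\<alpha>\<in>UNIV. n \<alpha> b * nu \<alpha> h)) * K h)"
      by (simp add: B1)
    also have "\<dots> = K b - (\<Sum>h\<in>UNIV. (\<Sum>\<alpha>\<in>UNIV. n \<alpha> b * nu \<alpha> h) * K h)"
      by (simp add: left_diff_distrib sum_subtractf delta_sum')
    also have "(\<Sum>h\<in>UNIV. (\<Sum>\<alpha>\<in>UNIV. n \<alpha> b * nu \<alpha> h) * K h) = (\<Sum>\<alpha>\<in>UNIV. n \<alpha> b * (\<Sum>h\<in>UNIV. nu \<alpha> h * K h))"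
      by (subst SM2) (simp add: sum_distrib_left mult.assoc)
    finally show ?thesis .
  qed
  have NF: "(\<Sum>b'\<in>UNIV. nu \<alpha> b' * (\<Sum>d\<in>UNIV. gb d a' * H \<beta> d b')) = (\<Sum>b'\<in>UNIV. nu \<alpha> b' * H \<beta> a' b')"
    for \<alpha> a'
    unfolding gb_def by (rule alg_claim1[OF Hs anti, symmetric])
  have C: "K b = H \<beta> a b - (\<Sum>\<gamma>\<in>UNIV. n \<gamma> a * (\<Sum>b'\<in>UNIV. nu \<gamma> b' * (\<Sum>d\<in>UNIV. gb d b * H \<beta> d b')))"
  proof -
    have "K b = H \<beta> a b - (\<Sum>d\<in>UNIV. (\<Sum>\<gamma>\<in>UNIV. nu \<gamma> d * n \<gamma> a) * H \<beta> d b)"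
      unfolding K_def gb_def by (simp add: left_diff_distrib sum_subtractf delta_sum)
    also have "(\<Sum>d\<in>UNIV. (\<Sum>\<gamma>\<in>UNIV. nu \<gamma> d * n \<gamma> a) * H \<beta> d b) = (\<Sum>\<gamma>\<in>UNIV. n \<gamma> a * (\<Sum>d\<in>UNIV. nu \<gamma> d * H \<beta> d b))"
      by (subst SM2) (simp add: sum_distrib_left mult_ac)
    also have "(\<lambda>\<gamma>. (\<Sum>d\<in>UNIV. nu \<gamma> d * H \<beta> d b)) = (\<lambda>\<gamma>. (\<Sum>b'\<in>UNIV. nu \<gamma> b' * (\<Sum>d\<in>UNIV. gb d b * H \<beta> d b')))"
      by (rule ext, subst NF, subst Hs, rule refl)
    finally show ?thesis .
  qed
  show ?thesis
    unfolding gb_def[symmetric] A B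
    using C unfolding K_def by simp
qed

lemma alg_claim3:
  fixes H :: "'k::finite \<Rightarrow> 'd::finite \<Rightarrow> 'd \<Rightarrow> real" and n nu :: "'k \<Rightarrow> 'd \<Rightarrow> real"
    and gi :: "'d \<Rightarrow> 'd \<Rightarrow> real" and Gm :: "'d \<Rightarrow> 'd \<Rightarrow> 'd \<Rightarrow> real"
  assumes Hs: "\<And>\<beta> a b. H \<beta> a b = H \<beta> b a"
    and anti: "\<And>a \<alpha> \<beta>. (\<Sum>b\<in>UNIV. nu \<alpha> b * H \<beta> a b) = - (\<Sum>b\<in>UNIV. nu \<beta> b * H \<alpha> a b)"
    and Gs: "\<And>c a e. Gm c a e = Gm c e a"
  shows "(\<Sum>b\<in>UNIV. nu \<alpha> b * ((\<Sum>h\<in>UNIV. gi a h * H \<beta> b h) - (\<Sum>e\<in>UNIV. Gm a b e * nu \<beta> e))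
              - nu \<beta> b * ((\<Sum>h\<in>UNIV. gi a h * H \<alpha> b h) - (\<Sum>e\<in>UNIV. Gm a b e * nu \<alpha> e)))
    = 2 * (\<Sum>b\<in>UNIV. gi a b * (\<Sum>b'\<in>UNIV. nu \<alpha> b' * (\<Sum>d\<in>UNIV. ((if d = b then 1 else 0) - (\<Sum>\<gamma>\<in>UNIV. nu \<gamma> d * n \<gamma> b)) * H \<beta> d b')))"
proof -
  define A where "A h \<alpha>' \<beta>' = (\<Sum>b\<in>UNIV. nu \<alpha>' b * H \<beta>' h b)" for h \<alpha>' \<beta>'
  have T: "(\<Sum>b\<in>UNIV. nu \<alpha>' b * (\<Sum>h\<in>UNIV. gi a h * H \<beta>' b h)) = (\<Sum>h\<in>UNIV. gi a h * A h \<alpha>' \<beta>')" for \<alpha>' \<beta>'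
    unfolding A_def by (subst SM1) (simp add: Hs[of \<beta>' _ _])
  have G: "(\<Sum>b\<in>UNIV. nu \<beta> b * (\<Sum>e\<in>UNIV. Gm a b e * nu \<alpha> e)) = (\<Sum>b\<in>UNIV. nu \<alpha> b * (\<Sum>e\<in>UNIV. Gm a b e * nu \<beta> e))"
  proof -
    have "(\<Sum>b\<in>UNIV. nu \<beta> b * (\<Sum>e\<in>UNIV. Gm a b e * nu \<alpha> e)) = (\<Sum>b\<in>UNIV. nu \<beta> b * (\<Sum>e\<in>UNIV. nu \<alpha> e * Gm a b e))"
      by (simp add: mult.commute)
    also have "\<dots> = (\<Sum>e\<in>UNIV. nu \<alpha> e * (\<Sum>b\<in>UNIV. nu \<beta> b * Gm a b e))" by (rule SM1)
    also have "\<dots> = (\<Sum>b\<in>UNIV. nu \<alpha> b * (\<Sum>e\<in>UNIV. Gm a b e * nu \<beta> e))"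
      by (rule sum.cong[OF refl], rule arg_cong[where f="\<lambda>z. _ * z"], rule sum.cong[OF refl])
         (simp add: Gs[of a _ _] mult.commute)
    finally show ?thesis .
  qed
  have Aa: "A h \<beta> \<alpha> = - A h \<alpha> \<beta>" for h unfolding A_def by (rule anti)
  have LHS: "(\<Sum>b\<in>UNIV. nu \<alpha> b * ((\<Sum>h\<in>UNIV. gi a h * H \<beta> b h) - (\<Sum>e\<in>UNIV. Gm a b e * nu \<beta> e))
              - nu \<beta> b * ((\<Sum>h\<in>UNIV. gi a h * H \<alpha> b h) - (\<Sum>e\<in>UNIV. Gm a b e * nu \<alpha> e)))
     = (\<Sum>h\<in>UNIV. gi a h * A h \<alpha> \<beta>) - (\<Sum>h\<in>UNIV. gi a h * A h \<beta> \<alpha>)"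
    using T[of \<alpha> \<beta>] T[of \<beta> \<alpha>] G
    by (simp add: right_diff_distrib sum_subtractf)
  have NF: "A h \<alpha> \<beta> = (\<Sum>b'\<in>UNIV. nu \<alpha> b' * (\<Sum>d\<in>UNIV. ((if d = h then 1 else 0) - (\<Sum>\<gamma>\<in>UNIV. nu \<gamma> d * n \<gamma> h)) * H \<beta> d b'))" for h
    unfolding A_def by (rule alg_claim1[OF Hs anti])
  show ?thesis
    unfolding LHS Aa NF[symmetric]
    by (simp add: sum_negf sum_distrib_left)
qed


lemma smooth_Ck: "smooth_on U f \<Longrightarrow> Ck n U f"
  unfolding smooth_on_def by blast

lemma Ck2_unfold:
  assumes "Ck (Suc (Suc 0)) U f"
  shows "f differentiable_on U" "pd i f differentiable_on U" "continuous_on U (pd j (pd i f))"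
  using assms by auto

lemma L_contr: "(\<Sum>b\<in>A. (\<Sum>f\<in>B. c f * d f b) * n b) = (\<Sum>f\<in>B. c f * (\<Sum>b\<in>A. d f b * (n b::real)))"
  by (subst SM2) (simp add: sum_distrib_left mult.assoc)

context
  fixes U Lam :: "(real^'d::finite) set" and g :: "real^'d \<Rightarrow> real^'d^'d"
    and s :: "'k::finite \<Rightarrow> real^'d \<Rightarrow> real" and x :: "real^'d"
  assumes RM: "riemannian_metric U g" and DM: "defining_map U s Lam"
    and GD: "gram_delta_Os2 U g s" and xL: "x \<in> Lam"
begin

lemma oU: "open U" using RM unfolding riemannian_metric_def by blast
lemma xU: "x \<in> U" using DM xL unfolding defining_map_def by blast
lemma sx0: "s \<alpha> x = 0" using DM xL unfolding defining_map_def by blast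

lemma ginvU: "y \<in> U \<Longrightarrow> invertible (g y)"
  using RM unfolding riemannian_metric_def by (blast intro: posdef_invertible)

lemma gsymU: "y \<in> U \<Longrightarrow> g y $ a $ b = g y $ b $ a"
proof -
  assume "y \<in> U"
  then have "transpose (g y) = g y" using RM unfolding riemannian_metric_def by blast
  then have "transpose (g y) $ a $ b = g y $ a $ b" by simp
  then show ?thesis by (simp add: transpose_def)
qed

lemma gisymU: "y \<in> U \<Longrightarrow> ginv g y a b = ginv g y b a"
proof -
  assume y: "y \<in> U"
  then have "transpose (g y) = g y" using RM unfolding riemannian_metric_def by blast
  then have "transpose (matrix_inv (g y)) = matrix_inv (g y)" using minv_sym ginvU[OF y] by blast
  then have "transpose (matrix_inv (g y)) $ a $ b = matrix_inv (g y) $ a $ b" by simp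
  then show ?thesis by (simp add: transpose_def ginv_def)
qed

lemma g_diff: "y \<in> U \<Longrightarrow> (\<lambda>y. g y $ a $ b) differentiable (at y)"
proof -
  assume y: "y \<in> U"
  have "Ck (Suc 0) U (\<lambda>y. g y $ a $ b)"
    using RM unfolding riemannian_metric_def by (blast intro: smooth_Ck)
  then show ?thesis using y oU differentiable_on_eq_differentiable_at by auto
qed

lemma gi_diff: "(\<lambda>y. ginv g y a b) differentiable (at x)"
  unfolding ginv_def
  by (rule minv_differentiable[OF oU xU ginvU g_diff[OF xU]])

lemma s_Ck2: "Ck (Suc (Suc 0)) U (s \<alpha>)"
  using DM unfolding defining_map_def by (blast intro: smooth_Ck)

lemma s_diff: "y \<in> U \<Longrightarrow> s \<alpha> differentiable (at y)"
  using Ck2_unfold(1)[OF s_Ck2] oU differentiable_on_eq_differentiable_at by blast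

lemma nlow_fun: "nlow s \<alpha> b = pd b (s \<alpha>)"
  by (rule ext) (simp add: nlow_def)

lemma nlow_diff: "y \<in> U \<Longrightarrow> nlow s \<alpha> b differentiable (at y)"
  unfolding nlow_fun
  using Ck2_unfold(2)[OF s_Ck2] oU differentiable_on_eq_differentiable_at by blast

lemma clairaut_s: "pd a (nlow s \<beta> b) x = pd b (nlow s \<beta> a) x"
  unfolding nlow_fun
  using nlow_diff[unfolded nlow_fun] Ck2_unfold(3)[OF s_Ck2] by (intro clairaut[OF oU xU s_diff]) auto

lemma nup_fun: "nup g s \<alpha> c = (\<lambda>y. \<Sum>b\<in>UNIV. ginv g y c b * nlow s \<alpha> b y)"
  by (rule ext) (simp add: nup_def)

lemma nup_diff: "nup g s \<alpha> c differentiable (at x)"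
  unfolding nup_fun
  by (intro differentiable_sum ballI differentiable_mult gi_diff nlow_diff xU) simp

lemma dgpd_sym: "pd c (\<lambda>y. g y $ a $ b) x = pd c (\<lambda>y. g y $ b $ a) x"
  by (rule pd_local[OF g_diff[OF xU] oU xU]) (rule gsymU)

lemma Gamma_sym: "Gamma g c a b x = Gamma g c b a x"
  unfolding Gamma_def by (simp add: dgpd_sym[of _ a b] add.commute)

lemma Gamma_low: "(\<Sum>k\<in>UNIV. g x $ e $ k * Gamma g k a f x) =
    1/2 * (pd a (\<lambda>y. g y $ e $ f) x + pd f (\<lambda>y. g y $ e $ a) x - pd e (\<lambda>y. g y $ a $ f) x)"
proof -
  have "(\<Sum>k\<in>UNIV. g x $ e $ k * Gamma g k a f x) = 1/2 * (\<Sum>k\<in>UNIV. g x $ e $ k *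
     (\<Sum>h\<in>UNIV. matrix_inv (g x) $ k $ h * (pd a (\<lambda>y. g y $ h $ f) x + pd f (\<lambda>y. g y $ h $ a) x - pd h (\<lambda>y. g y $ a $ f) x)))"
    unfolding Gamma_def ginv_def by (simp add: sum_distrib_left mult.left_commute)
  also have "\<dots> = 1/2 * (pd a (\<lambda>y. g y $ e $ f) x + pd f (\<lambda>y. g y $ e $ a) x - pd e (\<lambda>y. g y $ a $ f) x)"
    by (subst contract1(1)[OF ginvU[OF xU]]) (rule refl)
  finally show ?thesis .
qed

lemma compat: "pd a (\<lambda>y. g y $ e $ f) x =
   (\<Sum>k\<in>UNIV. g x $ e $ k * Gamma g k a f x) + (\<Sum>k\<in>UNIV. g x $ f $ k * Gamma g k a e x)"
  unfolding Gamma_low using dgpd_sym[of a e f] dgpd_sym[of e a f] dgpd_sym[of f a e] by (simp add: field_simps)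


lemma dgi: "pd a (\<lambda>y. ginv g y c b) x =
   - (\<Sum>e\<in>UNIV. ginv g x c e * (\<Sum>f\<in>UNIV. pd a (\<lambda>y. g y $ e $ f) x * ginv g x f b))"
proof -
  have E: "(\<Sum>e\<in>UNIV. g x $ c' $ e * pd a (\<lambda>y. ginv g y e b) x) =
      - (\<Sum>e\<in>UNIV. pd a (\<lambda>y. g y $ c' $ e) x * ginv g x e b)" for c'
  proof -
    have id: "\<And>y. y \<in> U \<Longrightarrow> (\<Sum>e\<in>UNIV. g y $ c' $ e * ginv g y e b) = (if c' = b then 1 else 0)"
      unfolding ginv_def using inv_entry(1)[OF ginvU] by blast
    have dif: "(\<lambda>y. \<Sum>e\<in>UNIV. g y $ c' $ e * ginv g y e b) differentiable (at x)"
      by (intro differentiable_sum ballI differentiable_mult g_diff[OF xU] gi_diff) simp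
    have "pd a (\<lambda>y. \<Sum>e\<in>UNIV. g y $ c' $ e * ginv g y e b) x = pd a (\<lambda>y. if c' = b then 1 else 0) x"
      by (rule pd_local[OF dif oU xU id])
    also have "\<dots> = 0" by (rule pd_const)
    finally have z: "pd a (\<lambda>y. \<Sum>e\<in>UNIV. g y $ c' $ e * ginv g y e b) x = 0" .
    have "pd a (\<lambda>y. \<Sum>e\<in>UNIV. g y $ c' $ e * ginv g y e b) x =
       (\<Sum>e\<in>UNIV. pd a (\<lambda>y. g y $ c' $ e) x * ginv g x e b + g x $ c' $ e * pd a (\<lambda>y. ginv g y e b) x)"
      by (subst pd_sum) (auto intro!: differentiable_mult g_diff[OF xU] gi_diff simp: pd_mult[OF g_diff[OF xU] gi_diff])
    with z show ?thesis by (simp add: sum.distrib eq_neg_iff_add_eq_0 add.commute)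
  qed
  have "pd a (\<lambda>y. ginv g y c b) x = (\<Sum>c'\<in>UNIV. ginv g x c c' * (\<Sum>e\<in>UNIV. g x $ c' $ e * pd a (\<lambda>y. ginv g y e b) x))"
    unfolding ginv_def[of g x] using contract1(2)[OF ginvU[OF xU], of c "\<lambda>e. pd a (\<lambda>y. ginv g y e b) x"] by simp
  also have "\<dots> = (\<Sum>c'\<in>UNIV. ginv g x c c' * - (\<Sum>e\<in>UNIV. pd a (\<lambda>y. g y $ c' $ e) x * ginv g x e b))"
    using E by simp
  also have "\<dots> = - (\<Sum>e\<in>UNIV. ginv g x c e * (\<Sum>f\<in>UNIV. pd a (\<lambda>y. g y $ e $ f) x * ginv g x f b))"
    by (simp add: sum_negf)
  finally show ?thesis .
qed

lemma dnup: "pd a (nup g s \<alpha> c) x =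
   (\<Sum>h\<in>UNIV. ginv g x c h * cov_form g (\<lambda>e. nlow s \<alpha> e) a h x) - (\<Sum>e\<in>UNIV. Gamma g c a e x * nup g s \<alpha> e x)"
proof -
  have nu: "nup g s \<alpha> f x = (\<Sum>b\<in>UNIV. ginv g x f b * nlow s \<alpha> b x)" for f by (simp add: nup_def)
  have s0: "pd a (nup g s \<alpha> c) x = (\<Sum>b\<in>UNIV. pd a (\<lambda>y. ginv g y c b) x * nlow s \<alpha> b x + ginv g x c b * pd a (nlow s \<alpha> b) x)"
    unfolding nup_fun
    by (subst pd_sum) (auto intro!: differentiable_mult nlow_diff[OF xU] gi_diff simp: pd_mult[OF gi_diff nlow_diff[OF xU]])
  have s1: "(\<Sum>b\<in>UNIV. pd a (\<lambda>y. ginv g y c b) x * nlow s \<alpha> b x) =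
     - (\<Sum>e\<in>UNIV. ginv g x c e * (\<Sum>f\<in>UNIV. pd a (\<lambda>y. g y $ e $ f) x * nup g s \<alpha> f x))"
  proof -
    have "(\<Sum>b\<in>UNIV. pd a (\<lambda>y. ginv g y c b) x * nlow s \<alpha> b x) =
      - (\<Sum>b\<in>UNIV. (\<Sum>e\<in>UNIV. ginv g x c e * (\<Sum>f\<in>UNIV. pd a (\<lambda>y. g y $ e $ f) x * ginv g x f b)) * nlow s \<alpha> b x)"
      by (simp add: dgi sum_negf)
    also have "(\<Sum>b\<in>UNIV. (\<Sum>e\<in>UNIV. ginv g x c e * (\<Sum>f\<in>UNIV. pd a (\<lambda>y. g y $ e $ f) x * ginv g x f b)) * nlow s \<alpha> b x)
       = (\<Sum>e\<in>UNIV. ginv g x c e * (\<Sum>b\<in>UNIV. (\<Sum>f\<in>UNIV. pd a (\<lambda>y. g y $ e $ f) x * ginv g x f b) * nlow s \<alpha> b x))"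
      by (rule L_contr)
    also have "\<dots> = (\<Sum>e\<in>UNIV. ginv g x c e * (\<Sum>f\<in>UNIV. pd a (\<lambda>y. g y $ e $ f) x * nup g s \<alpha> f x))"
      unfolding nu by (simp only: L_contr)
    finally show ?thesis .
  qed
  have s2: "(\<Sum>f\<in>UNIV. pd a (\<lambda>y. g y $ e $ f) x * nup g s \<alpha> f x) =
     (\<Sum>k\<in>UNIV. g x $ e $ k * (\<Sum>f\<in>UNIV. Gamma g k a f x * nup g s \<alpha> f x))
     + (\<Sum>k\<in>UNIV. Gamma g k a e x * nlow s \<alpha> k x)" for e
  proof -
    have "(\<Sum>f\<in>UNIV. pd a (\<lambda>y. g y $ e $ f) x * nup g s \<alpha> f x) =
       (\<Sum>f\<in>UNIV. (\<Sum>k\<in>UNIV. g x $ e $ k * Gamma g k a f x) * nup g s \<alpha> f x)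
      + (\<Sum>f\<in>UNIV. (\<Sum>k\<in>UNIV. Gamma g k a e x * g x $ k $ f) * nup g s \<alpha> f x)"
    proof -
      have sw: "g x $ f $ k * Gamma g k a e x = Gamma g k a e x * g x $ k $ f" for f k
        using gsymU[OF xU, of f k] by simp
      show ?thesis unfolding compat by (simp add: distrib_right sum.distrib sw)
    qed
    also have "(\<Sum>f\<in>UNIV. (\<Sum>k\<in>UNIV. g x $ e $ k * Gamma g k a f x) * nup g s \<alpha> f x)
       = (\<Sum>k\<in>UNIV. g x $ e $ k * (\<Sum>f\<in>UNIV. Gamma g k a f x * nup g s \<alpha> f x))"
      by (rule L_contr)
    also have "(\<Sum>f\<in>UNIV. (\<Sum>k\<in>UNIV. Gamma g k a e x * g x $ k $ f) * nup g s \<alpha> f x)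
       = (\<Sum>k\<in>UNIV. Gamma g k a e x * (\<Sum>f\<in>UNIV. g x $ k $ f * nup g s \<alpha> f x))"
      by (rule L_contr)
    also have "(\<lambda>k. (\<Sum>f\<in>UNIV. g x $ k $ f * nup g s \<alpha> f x)) = (\<lambda>k. nlow s \<alpha> k x)"
      unfolding nu ginv_def by (rule ext, rule contract1(1)[OF ginvU[OF xU]])
    finally show ?thesis .
  qed
  have s3: "(\<Sum>e\<in>UNIV. ginv g x c e * (\<Sum>f\<in>UNIV. pd a (\<lambda>y. g y $ e $ f) x * nup g s \<alpha> f x)) =
      (\<Sum>f\<in>UNIV. Gamma g c a f x * nup g s \<alpha> f x) + (\<Sum>e\<in>UNIV. ginv g x c e * (\<Sum>k\<in>UNIV. Gamma g k a e x * nlow s \<alpha> k x))"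
    unfolding s2
    by (simp add: distrib_left sum.distrib contract1(2)[OF ginvU[OF xU], folded ginv_def])
  show ?thesis
    unfolding s0 sum.distrib s1 s3 cov_form_def
    by (simp add: right_diff_distrib sum_subtractf)
qed


lemma gram_eq: "y \<in> U \<Longrightarrow> gram g s \<alpha> \<beta> y = (\<Sum>c\<in>UNIV. nup g s \<alpha> c y * nlow s \<beta> c y)"
proof -
  assume y: "y \<in> U"
  have "gram g s \<alpha> \<beta> y = (\<Sum>b\<in>UNIV. \<Sum>a\<in>UNIV. ginv g y a b * nlow s \<alpha> a y * nlow s \<beta> b y)"
    unfolding gram_def by (rule sum.swap)
  also have "\<dots> = (\<Sum>b\<in>UNIV. \<Sum>a\<in>UNIV. ginv g y b a * nlow s \<alpha> a y * nlow s \<beta> b y)"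
    by (rule sum.cong[OF refl])+ (subst gisymU[OF y], rule refl)
  also have "\<dots> = (\<Sum>c\<in>UNIV. nup g s \<alpha> c y * nlow s \<beta> c y)"
    by (simp add: nup_def sum_distrib_right)
  finally show ?thesis .
qed

lemma gram_fun: "gram g s \<alpha> \<beta> = (\<lambda>y. \<Sum>a\<in>UNIV. \<Sum>b\<in>UNIV. ginv g y a b * nlow s \<alpha> a y * nlow s \<beta> b y)"
  by (rule ext) (simp add: gram_def)

lemma gram_diff: "gram g s \<alpha> \<beta> differentiable (at x)"
  unfolding gram_fun
  by (intro differentiable_sum ballI differentiable_mult gi_diff nlow_diff xU) simp_all

lemma dgram: "pd a (gram g s \<alpha> \<beta>) x =
   (\<Sum>h\<in>UNIV. cov_form g (\<lambda>e. nlow s \<alpha> e) a h x * nup g s \<beta> h x)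
   + (\<Sum>e\<in>UNIV. nup g s \<alpha> e x * cov_form g (\<lambda>e. nlow s \<beta> e) a e x)"
proof -
  have "pd a (gram g s \<alpha> \<beta>) x = pd a (\<lambda>y. \<Sum>c\<in>UNIV. nup g s \<alpha> c y * nlow s \<beta> c y) x"
    by (rule pd_local[OF gram_diff oU xU gram_eq])
  also have "\<dots> = (\<Sum>c\<in>UNIV. pd a (nup g s \<alpha> c) x * nlow s \<beta> c x + nup g s \<alpha> c x * pd a (nlow s \<beta> c) x)"
    by (subst pd_sum) (auto intro!: differentiable_mult nlow_diff[OF xU] nup_diff simp: pd_mult[OF nup_diff nlow_diff[OF xU]])
  also have "\<dots> = (\<Sum>c\<in>UNIV. (\<Sum>h\<in>UNIV. ginv g x c h * cov_form g (\<lambda>e. nlow s \<alpha> e) a h x) * nlow s \<beta> c x)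
      - (\<Sum>c\<in>UNIV. (\<Sum>e\<in>UNIV. Gamma g c a e x * nup g s \<alpha> e x) * nlow s \<beta> c x)
      + (\<Sum>c\<in>UNIV. nup g s \<alpha> c x * pd a (nlow s \<beta> c) x)"
    unfolding dnup by (simp add: left_diff_distrib sum.distrib sum_subtractf)
  also have "(\<Sum>c\<in>UNIV. (\<Sum>h\<in>UNIV. ginv g x c h * cov_form g (\<lambda>e. nlow s \<alpha> e) a h x) * nlow s \<beta> c x)
      = (\<Sum>h\<in>UNIV. cov_form g (\<lambda>e. nlow s \<alpha> e) a h x * nup g s \<beta> h x)"
  proof -
    have sw: "ginv g x c h * cov_form g (\<lambda>e. nlow s \<alpha> e) a h x = cov_form g (\<lambda>e. nlow s \<alpha> e) a h x * ginv g x h c" for c h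
      using gisymU[OF xU, of c h] by simp
    show ?thesis unfolding sw L_contr by (simp add: nup_def)
  qed
  also have "(\<Sum>c\<in>UNIV. (\<Sum>e\<in>UNIV. Gamma g c a e x * nup g s \<alpha> e x) * nlow s \<beta> c x)
      = (\<Sum>e\<in>UNIV. nup g s \<alpha> e x * (\<Sum>c\<in>UNIV. Gamma g c a e x * nlow s \<beta> c x))"
    by (simp only: mult.commute[of "Gamma g _ a _ x"] L_contr)
  finally show ?thesis
    by (simp add: cov_form_def right_diff_distrib sum_subtractf)
qed

lemma dgram0: "pd a (gram g s \<alpha> \<beta>) x = 0"
proof -
  obtain T :: "'k \<Rightarrow> 'k \<Rightarrow> 'k \<Rightarrow> 'k \<Rightarrow> real^'d \<Rightarrow> real" where
    Tsm: "\<And>\<gamma> \<delta> \<alpha> \<beta>. smooth_on U (T \<gamma> \<delta> \<alpha> \<beta>)" and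
    Teq: "\<And>y \<alpha> \<beta>. y \<in> U \<Longrightarrow> gram g s \<alpha> \<beta> y = (if \<alpha> = \<beta> then 1 else 0) +
        (\<Sum>\<gamma>\<in>UNIV. \<Sum>\<delta>\<in>UNIV. s \<gamma> y * s \<delta> y * T \<gamma> \<delta> \<alpha> \<beta> y)"
    using GD unfolding gram_delta_Os2_def by blast
  have Td: "T \<gamma> \<delta> \<alpha> \<beta> differentiable (at x)" for \<gamma> \<delta>
  proof -
    have "Ck (Suc 0) U (T \<gamma> \<delta> \<alpha> \<beta>)" using Tsm by (blast intro: smooth_Ck)
    then show ?thesis using xU oU differentiable_on_eq_differentiable_at by auto
  qed
  have sd: "s \<gamma> differentiable (at x)" for \<gamma> by (rule s_diff[OF xU])
  have "pd a (gram g s \<alpha> \<beta>) x = pd a (\<lambda>y. (if \<alpha> = \<beta> then 1 else 0) +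
        (\<Sum>\<gamma>\<in>UNIV. \<Sum>\<delta>\<in>UNIV. s \<gamma> y * s \<delta> y * T \<gamma> \<delta> \<alpha> \<beta> y)) x"
    by (rule pd_local[OF gram_diff oU xU Teq])
  also have "\<dots> = pd a (\<lambda>y. \<Sum>\<gamma>\<in>UNIV. \<Sum>\<delta>\<in>UNIV. s \<gamma> y * s \<delta> y * T \<gamma> \<delta> \<alpha> \<beta> y) x"
    by (subst pd_add) (auto intro!: differentiable_sum differentiable_mult sd Td simp: pd_const)
  also have "\<dots> = (\<Sum>\<gamma>\<in>UNIV. pd a (\<lambda>y. \<Sum>\<delta>\<in>UNIV. s \<gamma> y * s \<delta> y * T \<gamma> \<delta> \<alpha> \<beta> y) x)"
    by (rule pd_sum) (auto intro!: differentiable_sum differentiable_mult sd Td)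
  also have "\<dots> = (\<Sum>\<gamma>\<in>UNIV. \<Sum>\<delta>\<in>UNIV. pd a (\<lambda>y. s \<gamma> y * s \<delta> y * T \<gamma> \<delta> \<alpha> \<beta> y) x)"
    by (rule sum.cong[OF refl], rule pd_sum) (auto intro!: differentiable_mult sd Td)
  also have "\<dots> = 0"
    by (auto intro!: sum.neutral simp: pd_mult differentiable_mult sd Td sx0)
  finally show ?thesis .
qed

lemma anti: "(\<Sum>b\<in>UNIV. nup g s \<alpha> b x * cov_form g (\<lambda>e. nlow s \<beta> e) a b x) =
   - (\<Sum>b\<in>UNIV. nup g s \<beta> b x * cov_form g (\<lambda>e. nlow s \<alpha> e) a b x)"
  using dgram[of a \<alpha> \<beta>] dgram0[of a \<alpha> \<beta>] by (simp add: mult.commute eq_neg_iff_add_eq_0 add.commute)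

lemma Hsym: "cov_form g (\<lambda>e. nlow s \<beta> e) a b x = cov_form g (\<lambda>e. nlow s \<beta> e) b a x"
  unfolding cov_form_def using clairaut_s[of a \<beta> b] Gamma_sym by simp

lemma cov_vec_nup: "cov_vec g (\<lambda>e. nup g s \<beta> e) d c x = (\<Sum>h\<in>UNIV. ginv g x c h * cov_form g (\<lambda>e. nlow s \<beta> e) d h x)"
  unfolding cov_vec_def dnup by simp

end


theorem mainTheorem6:
  fixes U Lam :: "(real^'d::finite) set"
    and g :: "real^'d \<Rightarrow> real^'d^'d"
    and s :: "'k::finite \<Rightarrow> real^'d \<Rightarrow> real"
  assumes "riemannian_metric U g"
    and "defining_map U s Lam"
    and "gram_delta_Os2 U g s"
    and "x \<in> Lam"
  shows "(\<forall>a \<alpha> \<beta>. (\<Sum>b\<in>UNIV. nup g s \<alpha> b x * cov_form g (\<lambda>e. nlow s \<beta> e) a b x)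
              = normal_ff g s a \<alpha> \<beta> x)
    \<and> (\<forall>a b \<beta>. cov_form g (\<lambda>e. nlow s \<beta> e) a b x
              = second_ff g s a b \<beta> x
                + (\<Sum>\<alpha>\<in>UNIV. nlow s \<alpha> b x * normal_ff g s a \<alpha> \<beta> x)
                + (\<Sum>\<alpha>\<in>UNIV. nlow s \<alpha> a x * normal_ff g s b \<alpha> \<beta> x))
    \<and> (\<forall>a \<alpha> \<beta>. lie_bracket (nup g s \<alpha>) (nup g s \<beta>) a x
              = 2 * (\<Sum>b\<in>UNIV. ginv g x a b * normal_ff g s b \<alpha> \<beta> x))"
proof -
  have Hs: "\<And>\<beta> a b. cov_form g (\<lambda>e. nlow s \<beta> e) a b x = cov_form g (\<lambda>e. nlow s \<beta> e) b a x"
    by (rule Hsym[OF assms])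
  have an: "\<And>a \<alpha> \<beta>. (\<Sum>b\<in>UNIV. nup g s \<alpha> b x * cov_form g (\<lambda>e. nlow s \<beta> e) a b x) =
      - (\<Sum>b\<in>UNIV. nup g s \<beta> b x * cov_form g (\<lambda>e. nlow s \<alpha> e) a b x)"
    by (rule anti[OF assms])
  have nud: "\<And>\<alpha> a. nup g s \<alpha> a x = (\<Sum>b\<in>UNIV. ginv g x a b * nlow s \<alpha> b x)"
    by (simp add: nup_def)
  have gis: "\<And>a b. ginv g x a b = ginv g x b a"
    by (rule gisymU[OF assms xU[OF assms]])
  have inv: "\<And>b h. (\<Sum>c\<in>UNIV. g x $ b $ c * ginv g x c h) = (if b = h then 1 else 0)"
    unfolding ginv_def by (rule inv_entry(1)[OF ginvU[OF assms xU[OF assms]]])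
  have Gs: "\<And>c a e. Gamma g c a e x = Gamma g c e a x"
    by (rule Gamma_sym[OF assms])
  note c1 = alg_claim1[where H="\<lambda>\<beta> a b. cov_form g (\<lambda>e. nlow s \<beta> e) a b x"
      and nu="\<lambda>\<alpha> b. nup g s \<alpha> b x" and n="\<lambda>\<alpha> b. nlow s \<alpha> b x", OF Hs an]
  note c2 = alg_claim2[where H="\<lambda>\<beta> a b. cov_form g (\<lambda>e. nlow s \<beta> e) a b x"
      and nu="\<lambda>\<alpha> b. nup g s \<alpha> b x" and n="\<lambda>\<alpha> b. nlow s \<alpha> b x"
      and gi="\<lambda>a b. ginv g x a b" and gm="\<lambda>a b. g x $ a $ b", OF Hs an nud gis inv]
  note c3 = alg_claim3[where H="\<lambda>\<beta> a b. cov_form g (\<lambda>e. nlow s \<beta> e) a b x"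
      and nu="\<lambda>\<alpha> b. nup g s \<alpha> b x" and n="\<lambda>\<alpha> b. nlow s \<alpha> b x"
      and gi="\<lambda>a b. ginv g x a b" and Gm="\<lambda>c a e. Gamma g c a e x", OF Hs an Gs]
  show ?thesis
  proof (intro conjI allI)
    fix a \<alpha> \<beta>
    show "(\<Sum>b\<in>UNIV. nup g s \<alpha> b x * cov_form g (\<lambda>e. nlow s \<beta> e) a b x) = normal_ff g s a \<alpha> \<beta> x"
      unfolding normal_ff_def gbar_def by (rule c1)
  next
    fix a b \<beta>
    show "cov_form g (\<lambda>e. nlow s \<beta> e) a b x
              = second_ff g s a b \<beta> x
                + (\<Sum>\<alpha>\<in>UNIV. nlow s \<alpha> b x * normal_ff g s a \<alpha> \<beta> x)
                + (\<Sum>\<alpha>\<in>UNIV. nlow s \<alpha> a x * normal_ff g s b \<alpha> \<beta> x)"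
      unfolding second_ff_def gbar_low_def gbar_def normal_ff_def cov_vec_nup[OF assms]
      by (rule c2)
  next
    fix a \<alpha> \<beta>
    show "lie_bracket (nup g s \<alpha>) (nup g s \<beta>) a x = 2 * (\<Sum>b\<in>UNIV. ginv g x a b * normal_ff g s b \<alpha> \<beta> x)"
      unfolding lie_bracket_def dnup[OF assms] normal_ff_def gbar_def
      by (rule c3)
  qed
qed


end
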